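(* Let $A$ be a bounded linear operator on a complex Hilbert space $\mathcal H \neq \{0\}$. Then \[ W_0(A)\cap \mathcal C_A = \operatorname{cl} W(A)\cap \mathcal C_A = \sigma(A)\cap \mathcal C_A, \] where $\mathcal C_A=\{z\in\mathbb C : |z|=\|A\|\}$.
   Context: The numerical range of $A$ is $W(A)=\{\langle Ax,x\rangle : x\in\mathcal H,\ \|x\|=1\}$, and $\operatorname{cl}W(A)$ denotes its closure in $\mathbb C$. The maximal numerical range $W_0(A)$ is the set of all $\lambda\in\mathbb C$ for which there exist unit vectors $x_n\in\mathcal H$ with $\|Ax_n\|\to\|A\|$ and $\langle Ax_n,x_n\rangle\to\lambda$. $\sigma(A)$ denotes the spectrum of $A$. *)

theory Defs
  imports "HOL-Analysis.Analysis"
begin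

class complex_hilbert = banach +
  fixes scaleC :: "complex \<Rightarrow> 'a \<Rightarrow> 'a"
    and cinner :: "'a \<Rightarrow> 'a \<Rightarrow> complex"
  assumes scaleC_add_right: "scaleC c (x + y) = scaleC c x + scaleC c y"
    and scaleC_add_left: "scaleC (b + c) x = scaleC b x + scaleC c x"
    and scaleC_scaleC: "scaleC b (scaleC c x) = scaleC (b * c) x"
    and scaleC_one: "scaleC 1 x = x"
    and scaleR_scaleC: "scaleR r x = scaleC (complex_of_real r) x"
    and cinner_add_left: "cinner (x + y) z = cinner x z + cinner y z"
    and cinner_scaleC_left: "cinner (scaleC c x) y = c * cinner x y"
    and cinner_commute: "cinner y x = cnj (cinner x y)"
    and norm_cinner: "norm x = sqrt (Re (cinner x x))"

definition bounded_clinear :: "('a::complex_hilbert \<Rightarrow> 'a) \<Rightarrow> bool" where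
  "bounded_clinear T \<longleftrightarrow> bounded_linear T \<and> (\<forall>c x. T (scaleC c x) = scaleC c (T x))"

definition num_range :: "('a::complex_hilbert \<Rightarrow> 'a) \<Rightarrow> complex set" where
  "num_range A = {cinner (A x) x | x. norm x = 1}"

definition max_num_range :: "('a::complex_hilbert \<Rightarrow> 'a) \<Rightarrow> complex set" where
  "max_num_range A = {l. \<exists>xs :: nat \<Rightarrow> 'a. (\<forall>n. norm (xs n) = 1) \<and>
       (\<lambda>n. norm (A (xs n))) \<longlonglongrightarrow> onorm A \<and>
       (\<lambda>n. cinner (A (xs n)) (xs n)) \<longlonglongrightarrow> l}"

definition op_invertible :: "('a::complex_hilbert \<Rightarrow> 'a) \<Rightarrow> bool" where
  "op_invertible T \<longleftrightarrow> (\<exists>B. bounded_clinear B \<and> B \<circ> T = id \<and> T \<circ> B = id)"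

definition op_spectrum :: "('a::complex_hilbert \<Rightarrow> 'a) \<Rightarrow> complex set" where
  "op_spectrum A = {l. \<not> op_invertible (\<lambda>x. A x - scaleC l x)}"

end

theory Submission
  imports Defs
begin


lemma scaleC_zero_right[simp]:
  fixes x y z :: "'a::complex_hilbert"
  shows "scaleC c 0 = 0"
  using scaleC_add_right[of c 0 0] by simp
lemma scaleC_minus_right:
  fixes x y z :: "'a::complex_hilbert"
  shows "scaleC c (- x) = - scaleC c x"
  using scaleC_add_right[of c x "-x"] by (simp add: eq_neg_iff_add_eq_0 add.commute)
lemma scaleC_diff_right:
  fixes x y z :: "'a::complex_hilbert"
  shows "scaleC c (x - y) = scaleC c x - scaleC c y"
  using scaleC_add_right[of c x "-y"] by (simp add: scaleC_minus_right)
lemma scaleC_zero_left[simp]: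
  fixes x y z :: "'a::complex_hilbert"
  shows "scaleC 0 x = 0"
  using scaleC_add_left[of 0 0 x] by simp
lemma scaleC_minus_left:
  fixes x y z :: "'a::complex_hilbert"
  shows "scaleC (- c) x = - scaleC c x"
  using scaleC_add_left[of c "-c" x] by (simp add: eq_neg_iff_add_eq_0 add.commute)
lemma scaleC_diff_left:
  fixes x y z :: "'a::complex_hilbert"
  shows "scaleC (b - c) x = scaleC b x - scaleC c x"
  using scaleC_add_left[of b "-c" x] by (simp add: scaleC_minus_left)
lemma cinner_zero_left[simp]:
  fixes x y z :: "'a::complex_hilbert"
  shows "cinner 0 y = 0"
  using cinner_add_left[of 0 0 y] by simp
lemma cinner_minus_left:
  fixes x y z :: "'a::complex_hilbert"
  shows "cinner (- x) y = - cinner x y"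
proof -
  have "cinner x y + cinner (- x) y = 0" using cinner_add_left[of x "-x" y] by simp
  then show ?thesis by (rule add_eq_0_iff[THEN iffD1])
qed
lemma cinner_diff_left:
  fixes x y z :: "'a::complex_hilbert"
  shows "cinner (x - y) z = cinner x z - cinner y z"
  using cinner_add_left[of x "-y" z] by (simp add: cinner_minus_left)
lemma cinner_add_right:
  fixes x y z :: "'a::complex_hilbert"
  shows "cinner x (y + z) = cinner x y + cinner x z"
  by (simp add: cinner_commute[of x] cinner_add_left)
lemma cinner_scaleC_right:
  fixes x y z :: "'a::complex_hilbert"
  shows "cinner x (scaleC c y) = cnj c * cinner x y"
  by (simp add: cinner_commute[of x] cinner_scaleC_left)
lemma cinner_self_Im:
  fixes x y z :: "'a::complex_hilbert"
  shows "Im (cinner x x) = 0"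
proof -
  have "Im (cinner x x) = - Im (cinner x x)"
    using arg_cong[OF cinner_commute[of x x], of Im] by (simp only: cnj.sel)
  then show ?thesis by linarith
qed
lemma cinner_self_Re:
  fixes x y z :: "'a::complex_hilbert"
  shows "Re (cinner x x) = norm x ^ 2"
proof -
  have "Re (cinner x x) \<ge> 0"
  proof (rule ccontr)
    assume "\<not> ?thesis"
    then have "sqrt (Re (cinner x x)) < 0" by simp
    then show False using norm_cinner[of x] norm_ge_zero[of x] by linarith
  qed
  then show ?thesis using norm_cinner[of x] by simp
qed
lemma cinner_self:
  fixes x y z :: "'a::complex_hilbert"
  shows "cinner x x = complex_of_real (norm x ^ 2)"
  using cinner_self_Re[of x] cinner_self_Im[of x] by (simp add: complex_eq_iff)
lemma norm_scaleC:
  fixes x y z :: "'a::complex_hilbert"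
  shows "norm (scaleC c x) = cmod c * norm x"
proof -
  have "cinner (scaleC c x) (scaleC c x) = (c * cnj c) * cinner x x"
    by (simp add: cinner_scaleC_left cinner_scaleC_right mult.assoc)
  also have "\<dots> = complex_of_real ((cmod c * norm x)^2)"
    by (simp add: cinner_self complex_norm_square[symmetric] power_mult_distrib)
  finally have c1: "cinner (scaleC c x) (scaleC c x) = complex_of_real ((cmod c * norm x)^2)" .
  have "norm (scaleC c x) ^ 2 = Re (cinner (scaleC c x) (scaleC c x))" by (rule cinner_self_Re[symmetric])
  also have "\<dots> = (cmod c * norm x)^2" by (simp only: c1 Re_complex_of_real)
  finally have "norm (scaleC c x) ^ 2 = (cmod c * norm x)^2" .
  then show ?thesis by (simp add: power2_eq_iff_nonneg)
qed
lemma norm_add_sq: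
  fixes x y z :: "'a::complex_hilbert"
  shows "norm (x + y) ^ 2 = norm x ^ 2 + norm y ^ 2 + 2 * Re (cinner x y)"
proof -
  have "cinner (x+y) (x+y) = cinner x x + cinner y y + cinner x y + cnj (cinner x y)"
    by (simp add: cinner_add_left cinner_add_right cinner_commute[of y x])
  then have "Re (cinner (x+y) (x+y)) = Re (cinner x x) + Re (cinner y y) + 2 * Re (cinner x y)"
    by simp
  then show ?thesis by (simp add: cinner_self_Re)
qed
lemma Re_cinner_le:
  fixes x y z :: "'a::complex_hilbert"
  shows "Re (cinner x y) \<le> norm x * norm y"
proof -
  have "norm (x+y) ^ 2 \<le> (norm x + norm y)^2"
    by (simp add: norm_triangle_ineq power_mono)
  then show ?thesis by (simp add: norm_add_sq power2_sum)
qed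
lemma cinner_CS:
  fixes x y z :: "'a::complex_hilbert"
  shows "cmod (cinner x y) \<le> norm x * norm y"
proof (cases "cinner x y = 0")
  case True then show ?thesis by simp
next
  case False
  define a where "a = cinner x y"
  define t where "t = a / complex_of_real (cmod a)"
  have "cinner x (scaleC t y) = cnj t * a" by (simp add: cinner_scaleC_right a_def)
  also have "\<dots> = (a * cnj a) / complex_of_real (cmod a)" by (simp add: t_def)
  also have "\<dots> = complex_of_real (cmod a)" using False a_def
    by (simp add: complex_norm_square[symmetric] power2_eq_square)
  finally have "cinner x (scaleC t y) = complex_of_real (cmod (cinner x y))" by (simp add: a_def)
  then have "cmod (cinner x y) = Re (cinner x (scaleC t y))" by simp
  also have "\<dots> \<le> norm x * norm (scaleC t y)" by (rule Re_cinner_le)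
  also have "\<dots> = norm x * norm y" using False by (simp add: norm_scaleC t_def a_def norm_divide)
  finally show ?thesis .
qed


lemma surj_perturb:
  fixes L K :: "'a::banach \<Rightarrow> 'a"
  assumes L: "linear L" "surj L" and Lb: "\<And>x. c * norm x \<le> norm (L x)" and c: "c > 0"
    and K: "linear K" and Kb: "\<And>x. norm (K x) \<le> k * norm x" and k: "0 \<le> k" "k < c"
  shows "surj (\<lambda>x. L x + K x)"
proof -
  interpret L: linear L by fact
  interpret K: linear K by fact
  define R where "R = inv L"
  have LR: "L (R z) = z" for z using L(2) by (simp add: R_def surj_f_inv_f)
  have inj: "a = b" if "L a = L b" for a b
  proof -
    have "c * norm (a - b) \<le> norm (L (a - b))" by (rule Lb)
    also have "\<dots> = 0" using that by (simp add: L.diff)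
    finally show ?thesis using c by (simp add: mult_le_0_iff)
  qed
  have Rdiff: "R a - R b = R (a - b)" for a b
    by (rule inj) (simp add: L.diff LR)
  have Rb: "norm (R z) \<le> norm z / c" for z
    using Lb[of "R z"] c by (simp add: LR field_simps mult.commute)
  show ?thesis
  proof (rule surjI)
    fix y
    define f where "f x = R (y - K x)" for x
    have "\<exists>!x. f x = x"
    proof (rule banach_fix_type[of "k / c"])
      show "0 \<le> k / c" using k c by simp
      show "k / c < 1" using k c by simp
      show "\<forall>x z. dist (f x) (f z) \<le> k / c * dist x z"
      proof (intro allI)
        fix x z
        have "dist (f x) (f z) = norm (R (K z - K x))"
          by (simp add: f_def dist_norm Rdiff algebra_simps)
        also have "\<dots> \<le> norm (K z - K x) / c" by (rule Rb)
        also have "\<dots> = norm (K (z - x)) / c" by (simp add: K.diff)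
        also have "\<dots> \<le> k * norm (z - x) / c" using Kb[of "z - x"] c by (simp add: divide_right_mono)
        finally show "dist (f x) (f z) \<le> k / c * dist x z" by (simp add: dist_norm norm_minus_commute)
      qed
    qed
    then obtain x where "f x = x" by blast
    then have "L x = y - K x" using LR[of "y - K x"] by (simp add: f_def)
    then show "L (SOME x. L x + K x = y) + K (SOME x. L x + K x = y) = y"
    proof -
      have "L x + K x = y" using \<open>L x = y - K x\<close> by simp
      then show ?thesis by (rule someI[of "\<lambda>z. L z + K z = y" x])
    qed
  qed
qed

lemma invertible_of_bij:
  fixes T :: "'a::complex_hilbert \<Rightarrow> 'a"
  assumes T: "bounded_linear T" and Tc: "\<And>c x. T (scaleC c x) = scaleC c (T x)"
    and s: "surj T" and e: "e > 0" and Tb: "\<And>x. e * norm x \<le> norm (T x)"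
  shows "op_invertible T"
proof -
  interpret T: bounded_linear T by fact
  define B where "B = inv T"
  have TB: "T (B z) = z" for z using s by (simp add: B_def surj_f_inv_f)
  have inj: "inj T"
  proof (rule injI)
    fix a b assume "T a = T b"
    have "e * norm (a - b) \<le> norm (T (a - b))" by (rule Tb)
    also have "\<dots> = 0" using \<open>T a = T b\<close> by (simp add: T.diff)
    finally show "a = b" using e by (simp add: mult_le_0_iff)
  qed
  have injD: "a = b" if "T a = T b" for a b using inj that by (simp add: inj_eq)
  have "bounded_linear B"
  proof (rule bounded_linear_intro[where K="1/e"])
    show "B (x + y) = B x + B y" for x y by (rule injD) (simp add: T.add TB)
    show "B (scaleR r x) = scaleR r (B x)" for r x by (rule injD) (simp add: T.scale TB)
    show "norm (B x) \<le> norm x * (1/e)" for x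
      using Tb[of "B x"] e by (simp add: TB field_simps mult.commute)
  qed
  moreover have "\<forall>c x. B (scaleC c x) = scaleC c (B x)"
    by (intro allI, rule injD) (simp add: Tc TB)
  ultimately have "bounded_clinear B" by (simp add: bounded_clinear_def)
  moreover have "B \<circ> T = id" using inj by (simp add: B_def)
  moreover have "T \<circ> B = id" using s by (simp add: B_def surj_iff)
  ultimately show ?thesis unfolding op_invertible_def by blast
qed


lemma bl_scaleC: "bounded_linear (\<lambda>x::'a::complex_hilbert. scaleC c x)"
proof (rule bounded_linear_intro[where K="cmod c"])
  show "scaleC c (x + y) = scaleC c x + scaleC c y" for x y by (rule scaleC_add_right)
  show "scaleC c (scaleR r x) = scaleR r (scaleC c x)" for r x
    by (simp add: scaleR_scaleC scaleC_scaleC mult.commute)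
  show "norm (scaleC c x) \<le> norm x * cmod c" for x by (simp add: norm_scaleC mult.commute)
qed

lemma scaleC_commute: "scaleC a (scaleC b (x::'a::complex_hilbert)) = scaleC b (scaleC a x)"
  by (simp add: scaleC_scaleC mult.commute)

lemma unit_seq:
  fixes A :: "'a::complex_hilbert \<Rightarrow> 'a"
  assumes "l \<in> closure (num_range A)"
  obtains xs where "\<And>n. norm (xs n) = 1" "(\<lambda>n. cinner (A (xs n)) (xs n)) \<longlonglongrightarrow> l"
proof -
  obtain f where f: "\<And>n. f n \<in> num_range A" "f \<longlonglongrightarrow> l"
    using assms unfolding closure_sequential by blast
  have "\<forall>n. \<exists>x. norm x = 1 \<and> f n = cinner (A x) x" using f(1) unfolding num_range_def by blast
  then obtain xs where xs0: "\<forall>n. norm (xs n) = 1 \<and> f n = cinner (A (xs n)) (xs n)"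
    by (rule exE[OF choice])
  then have xs: "\<And>n. norm (xs n) = 1 \<and> f n = cinner (A (xs n)) (xs n)" by blast
  show ?thesis
  proof (rule that[of xs])
    show "norm (xs n) = 1" for n using xs by blast
    have "f = (\<lambda>n. cinner (A (xs n)) (xs n))" using xs by auto
    then show "(\<lambda>n. cinner (A (xs n)) (xs n)) \<longlonglongrightarrow> l" using f(2) by simp
  qed
qed

theorem lemma1:
  fixes A :: "'a::complex_hilbert \<Rightarrow> 'a"
  assumes "\<exists>x::'a. x \<noteq> 0"
    and "bounded_clinear A"
  shows "max_num_range A \<inter> {z. cmod z = onorm A} = closure (num_range A) \<inter> {z. cmod z = onorm A}
       \<and> closure (num_range A) \<inter> {z. cmod z = onorm A} = op_spectrum A \<inter> {z. cmod z = onorm A}"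
proof -
  define r where "r = onorm A"
  have A: "bounded_linear A" and Ac: "\<And>c x. A (scaleC c x) = scaleC c (A x)"
    using assms(2) by (auto simp: bounded_clinear_def)
  interpret A: bounded_linear A by fact
  have Ab: "norm (A x) \<le> r * norm x" for x using onorm[OF A] by (simp add: r_def)
  have r0: "r \<ge> 0" using onorm_pos_le[OF A] by (simp add: r_def)
  obtain x0 :: 'a where "x0 \<noteq> 0" using assms(1) by blast
  define u where "u = scaleR (1 / norm x0) x0"
  have u: "norm u = 1" using \<open>x0 \<noteq> 0\<close> by (simp add: u_def)
  have P1: "max_num_range A \<subseteq> closure (num_range A)"
  proof
    fix l assume "l \<in> max_num_range A"
    then obtain xs where xs: "\<forall>n. norm (xs n) = (1::real)"
      "(\<lambda>n. cinner (A (xs n)) (xs n)) \<longlonglongrightarrow> l"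
      unfolding max_num_range_def by blast
    have "\<forall>n. cinner (A (xs n)) (xs n) \<in> num_range A"
      using xs(1) unfolding num_range_def by blast
    then show "l \<in> closure (num_range A)" unfolding closure_sequential using xs(2)
      by (intro exI[of _ "\<lambda>n. cinner (A (xs n)) (xs n)"]) simp
  qed
  have P2: "l \<in> max_num_range A" if l: "l \<in> closure (num_range A)" "cmod l = r" for l
  proof -
    obtain xs where xs: "\<And>n. norm (xs n) = 1" "(\<lambda>n. cinner (A (xs n)) (xs n)) \<longlonglongrightarrow> l"
      using unit_seq[OF l(1)] by blast
    have "(\<lambda>n. norm (A (xs n))) \<longlonglongrightarrow> r"
    proof (rule real_tendsto_sandwich[where f="\<lambda>n. cmod (cinner (A (xs n)) (xs n))" and h="\<lambda>n. r"])
      show "\<forall>\<^sub>F n in sequentially. cmod (cinner (A (xs n)) (xs n)) \<le> norm (A (xs n))"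
        proof (intro always_eventually allI)
          fix n show "cmod (cinner (A (xs n)) (xs n)) \<le> norm (A (xs n))"
            using cinner_CS[of "A (xs n)" "xs n"] xs(1)[of n] by simp
        qed
      show "\<forall>\<^sub>F n in sequentially. norm (A (xs n)) \<le> r"
        proof (intro always_eventually allI)
          fix n show "norm (A (xs n)) \<le> r"
            using Ab[of "xs n"] xs(1)[of n] by simp
        qed
      show "(\<lambda>n. cmod (cinner (A (xs n)) (xs n))) \<longlonglongrightarrow> r"
        using tendsto_norm[OF xs(2)] l(2) by simp
    qed simp
    then show ?thesis unfolding max_num_range_def r_def[symmetric]
      by (intro CollectI exI[of _ xs]) (simp add: xs)
  qed
  have P3: "l \<in> op_spectrum A" if l: "l \<in> closure (num_range A)" "cmod l = r" for l
  proof -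
    obtain xs where xs: "\<And>n. norm (xs n) = 1" "(\<lambda>n. cinner (A (xs n)) (xs n)) \<longlonglongrightarrow> l"
      using unit_seq[OF l(1)] by blast
    define T where "T x = A x - scaleC l x" for x
    define g where "g n = norm (A (xs n)) ^ 2 + r ^ 2 - 2 * Re (cnj l * cinner (A (xs n)) (xs n))" for n
    have Tg: "norm (T (xs n)) = sqrt (g n)" for n
    proof -
      have "T (xs n) = A (xs n) + scaleC (- l) (xs n)" by (simp add: T_def scaleC_minus_left)
      then have "norm (T (xs n)) ^ 2 = g n"
        by (simp add: norm_add_sq norm_scaleC xs(1) l(2) cinner_scaleC_right g_def)
      then show ?thesis using real_sqrt_unique[of "norm (T (xs n))" "g n"] by simp
    qed
    have nA: "(\<lambda>n. norm (A (xs n))) \<longlonglongrightarrow> r"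
    proof -
      show ?thesis
      proof (rule real_tendsto_sandwich[where f="\<lambda>n. cmod (cinner (A (xs n)) (xs n))" and h="\<lambda>n. r"])
        show "\<forall>\<^sub>F n in sequentially. cmod (cinner (A (xs n)) (xs n)) \<le> norm (A (xs n))"
          proof (intro always_eventually allI)
          fix n show "cmod (cinner (A (xs n)) (xs n)) \<le> norm (A (xs n))"
            using cinner_CS[of "A (xs n)" "xs n"] xs(1)[of n] by simp
        qed
        show "\<forall>\<^sub>F n in sequentially. norm (A (xs n)) \<le> r"
          proof (intro always_eventually allI)
          fix n show "norm (A (xs n)) \<le> r"
            using Ab[of "xs n"] xs(1)[of n] by simp
        qed
        show "(\<lambda>n. cmod (cinner (A (xs n)) (xs n))) \<longlonglongrightarrow> r"
          using tendsto_norm[OF xs(2)] l(2) by simp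
      qed simp
    qed
    have lim: "g \<longlonglongrightarrow> r ^ 2 + r ^ 2 - 2 * Re (cnj l * l)"
      unfolding g_def by (intro tendsto_intros nA xs(2))
    have "Re (cnj l * l) = r ^ 2"
    proof -
      have "cnj l * l = complex_of_real (r ^ 2)" using complex_norm_square[of l] l(2) by (simp add: mult.commute)
      then show ?thesis by simp
    qed
    then have eq: "r ^ 2 + r ^ 2 - 2 * Re (cnj l * l) = 0" by simp
    have "g \<longlonglongrightarrow> 0" using lim[unfolded eq] .
    then have "(\<lambda>n. sqrt (g n)) \<longlonglongrightarrow> sqrt 0" by (intro tendsto_intros)
    then have T0: "(\<lambda>n. norm (T (xs n))) \<longlonglongrightarrow> 0" by (simp add: Tg)
    show ?thesis
    proof (rule ccontr)
      assume "l \<notin> op_spectrum A"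
      moreover have "T = (\<lambda>x. A x - scaleC l x)" by (simp add: fun_eq_iff T_def)
      ultimately have "op_invertible T" unfolding op_spectrum_def by simp
      then obtain B where B: "bounded_clinear B" "B \<circ> T = id"
        unfolding op_invertible_def by blast
      then obtain K where K: "\<And>x. norm (B x) \<le> norm x * K"
        unfolding bounded_clinear_def using bounded_linear.bounded by blast
      have "norm (xs n) \<le> norm (T (xs n)) * K" for n
        using K[of "T (xs n)"] fun_cong[OF B(2), of "xs n"] by simp
      note nle = this
      have le: "1 \<le> norm (T (xs n)) * K" for n using nle[of n] xs(1)[of n] by simp
      have "(\<lambda>n. norm (T (xs n)) * K) \<longlonglongrightarrow> 0 * K" by (intro tendsto_intros T0)
      then have "1 \<le> (0::real) * K"
        by (rule tendsto_lowerbound) (simp_all add: le)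
      then show False by simp
    qed
  qed
  have P4: "l \<in> closure (num_range A)" if l: "l \<in> op_spectrum A" "cmod l = r" for l
  proof (rule ccontr)
    assume nl: "l \<notin> closure (num_range A)"
    obtain e where e: "e > 0" "ball l e \<subseteq> - closure (num_range A)"
      using nl open_contains_ball[of "- closure (num_range A)"] by blast
    define T where "T x = A x - scaleC l x" for x
    have T: "bounded_linear T" unfolding T_def by (intro bounded_linear_sub A bl_scaleC)
    interpret T: bounded_linear T by fact
    have Tc: "T (scaleC c x) = scaleC c (T x)" for c x
      by (simp add: T_def Ac scaleC_diff_right scaleC_commute)
    have unitb: "e \<le> norm (T v)" if v: "norm v = 1" for v
    proof -
      have "cinner (A v) v \<in> num_range A" using v unfolding num_range_def by blast
      then have "cinner (A v) v \<notin> ball l e" using e(2) closure_subset by blast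
      then have "e \<le> cmod (cinner (A v) v - l)" by (simp add: dist_norm norm_minus_commute)
      also have "cinner (A v) v - l = cinner (T v) v"
        using v by (simp add: T_def cinner_diff_left cinner_scaleC_left cinner_self)
      also have "cmod (cinner (T v) v) \<le> norm (T v)" using cinner_CS[of "T v" v] v by simp
      finally show ?thesis .
    qed
    have Tb: "e * norm x \<le> norm (T x)" for x
    proof (cases "x = 0")
      case True then show ?thesis by simp
    next
      case False
      have "e \<le> norm (T (scaleR (1 / norm x) x))" using False by (intro unitb) simp
      also have "\<dots> = norm (T x) / norm x" using False by (simp add: T.scale)
      finally show ?thesis using False by (simp add: field_simps)
    qed
    show False
    proof (cases "r = 0")
      case True
      have "e \<le> norm (T u)" using unitb u by blast
      also have "T u = A u" using True l(2) by (simp add: T_def)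
      also have "norm (A u) \<le> 0" using Ab[of u] True by simp
      finally show False using e(1) by simp
    next
      case False
      then have rp: "r > 0" using r0 by simp
      define d where "d = e / (4 * r)"
      have d: "d > 0" "d * r = e / 4" using rp e(1) by (auto simp: d_def)
      define m where "m = l + complex_of_real d * l"
      have cm: "cmod m = (1 + d) * r"
      proof -
        have "m = complex_of_real (1 + d) * l" by (simp add: m_def algebra_simps)
        then have "cmod m = cmod (complex_of_real (1 + d)) * cmod l" by (simp only: norm_mult)
        also have "cmod (complex_of_real (1 + d)) = 1 + d" using d by (simp only: norm_of_real)
        finally show ?thesis using l(2) by simp
      qed
      have s1: "surj (\<lambda>x. - scaleC m x + A x)"
      proof (rule surj_perturb[where L="\<lambda>x. - scaleC m x" and K=A and c="(1 + d) * r" and k=r])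
        show "linear (\<lambda>x::'a. - scaleC m x)" by (intro linear_compose_neg bounded_linear.linear bl_scaleC)
        have "m \<noteq> 0" using cm d rp by auto
        show "surj (\<lambda>x::'a. - scaleC m x)"
        proof (rule surjI)
          fix y :: 'a
          show "- scaleC m (scaleC (- inverse m) y) = y"
            using \<open>m \<noteq> 0\<close> by (simp add: scaleC_scaleC scaleC_minus_left scaleC_minus_right scaleC_one)
        qed
        show "(1 + d) * r * norm x \<le> norm (- scaleC m x)" for x :: 'a by (simp add: norm_scaleC cm)
        show "(1 + d) * r > 0" using d rp by simp
        show "linear A" by (rule A.linear)
        show "norm (A x) \<le> r * norm x" for x by (rule Ab)
        show "0 \<le> r" by (rule r0)
        show "r < (1 + d) * r" using d rp by simp
      qed
      have mx: "scaleC m x = scaleC l x + scaleC (complex_of_real d * l) x" for x :: 'a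
        by (simp only: m_def scaleC_add_left)
      have s2: "surj (\<lambda>x. (A x - scaleC m x) + scaleC (complex_of_real d * l) x)"
      proof (rule surj_perturb[where L="\<lambda>x. A x - scaleC m x" and K="\<lambda>x. scaleC (complex_of_real d * l) x" and c="e - d * r" and k="d * r"])
        show "linear (\<lambda>x. A x - scaleC m x)" by (intro linear_compose_sub A.linear bounded_linear.linear bl_scaleC)
        have "(\<lambda>x. A x - scaleC m x) = (\<lambda>x. - scaleC m x + A x)" by (simp add: fun_eq_iff)
        then show "surj (\<lambda>x. A x - scaleC m x)" using s1 by simp
        show "(e - d * r) * norm x \<le> norm (A x - scaleC m x)" for x
        proof -
          have eq: "A x - scaleC m x = T x - scaleC (complex_of_real d * l) x"
            using mx[of x] by (simp add: T_def diff_diff_eq)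
          have "norm (T x) \<le> norm (A x - scaleC m x) + norm (scaleC (complex_of_real d * l) x)"
          proof -
            have "T x = (A x - scaleC m x) + scaleC (complex_of_real d * l) x" by (simp add: eq)
            then show ?thesis using norm_triangle_ineq[of "A x - scaleC m x" "scaleC (complex_of_real d * l) x"]
              by simp
          qed
          also have "norm (scaleC (complex_of_real d * l) x) = d * r * norm x"
            using d l(2) by (simp add: norm_scaleC norm_mult)
          finally have "norm (T x) \<le> norm (A x - scaleC m x) + d * r * norm x" .
          moreover have "(e - d * r) * norm x = e * norm x - d * r * norm x" by (simp only: left_diff_distrib)
          ultimately show ?thesis using Tb[of x] by linarith
        qed
        show "e - d * r > 0" using d e by simp
        show "linear (\<lambda>x::'a. scaleC (complex_of_real d * l) x)" by (intro bounded_linear.linear bl_scaleC)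
        show "norm (scaleC (complex_of_real d * l) x) \<le> d * r * norm x" for x :: 'a
          using d l(2) by (simp add: norm_scaleC norm_mult)
        show "0 \<le> d * r" using d rp by simp
        show "d * r < e - d * r" using d e by linarith
      qed
      have eqT: "(\<lambda>x. (A x - scaleC m x) + scaleC (complex_of_real d * l) x) = T"
        by (simp add: fun_eq_iff T_def mx diff_diff_eq)
      have "surj T" by (subst eqT[symmetric]) (rule s2)
      then have "op_invertible T" using invertible_of_bij[OF T Tc _ e(1) Tb] by blast
      moreover have "T = (\<lambda>x. A x - scaleC l x)" by (simp add: fun_eq_iff T_def)
      ultimately show False using l(1) unfolding op_spectrum_def by simp
    qed
  qed
  have E1: "max_num_range A \<inter> {z. cmod z = r} = closure (num_range A) \<inter> {z. cmod z = r}"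
  proof (intro equalityI subsetI)
    fix z assume "z \<in> max_num_range A \<inter> {z. cmod z = r}"
    then show "z \<in> closure (num_range A) \<inter> {z. cmod z = r}" using P1 by blast
  next
    fix z assume "z \<in> closure (num_range A) \<inter> {z. cmod z = r}"
    then show "z \<in> max_num_range A \<inter> {z. cmod z = r}" using P2[of z] by simp
  qed
  have E2: "closure (num_range A) \<inter> {z. cmod z = r} = op_spectrum A \<inter> {z. cmod z = r}"
  proof (intro equalityI subsetI)
    fix z assume "z \<in> closure (num_range A) \<inter> {z. cmod z = r}"
    then show "z \<in> op_spectrum A \<inter> {z. cmod z = r}" using P3[of z] by simp
  next
    fix z assume "z \<in> op_spectrum A \<inter> {z. cmod z = r}"
    then show "z \<in> closure (num_range A) \<inter> {z. cmod z = r}" using P4[of z] by simp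
  qed
  show ?thesis using E1 E2 unfolding r_def by simp
qed

end
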